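(* Let $n\ge 2$ and let $X\subset\mathbb{P}^n$ be a hypersurface over $\mathbb{F}_q$ that contains at least one $\mathbb{F}_q$-point at which $X$ is smooth and satisfies $\#X(\mathbb{F}_q)\geq \#\mathbb{P}^n(\mathbb{F}_q)-1$. Then $\deg(X)\geq q+1$. *)

theory Defs
  imports Main
begin

text \<open>Polynomials in the n+1 variables x_0..x_n over a field, represented by their
coefficient function on exponent vectors (alpha :: nat => nat).\<close>

definition exps :: "nat \<Rightarrow> (nat \<Rightarrow> nat) set" where
  "exps n = {\<alpha>. \<forall>i>n. \<alpha> i = 0}"

definition supp :: "((nat \<Rightarrow> nat) \<Rightarrow> 'a::zero) \<Rightarrow> (nat \<Rightarrow> nat) set" where
  "supp c = {\<alpha>. c \<alpha> \<noteq> 0}"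

definition is_poly :: "nat \<Rightarrow> ((nat \<Rightarrow> nat) \<Rightarrow> 'a::zero) \<Rightarrow> bool" where
  "is_poly n c \<longleftrightarrow> finite (supp c) \<and> supp c \<subseteq> exps n"

definition peval :: "nat \<Rightarrow> ((nat \<Rightarrow> nat) \<Rightarrow> 'a::comm_ring_1) \<Rightarrow> (nat \<Rightarrow> 'a) \<Rightarrow> 'a" where
  "peval n c x = (\<Sum>\<alpha>\<in>supp c. c \<alpha> * (\<Prod>i\<le>n. x i ^ \<alpha> i))"

definition pderiv_var :: "nat \<Rightarrow> ((nat \<Rightarrow> nat) \<Rightarrow> 'a::comm_ring_1) \<Rightarrow> (nat \<Rightarrow> nat) \<Rightarrow> 'a" where
  "pderiv_var i c \<alpha> = of_nat (\<alpha> i + 1) * c (\<alpha>(i := \<alpha> i + 1))"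

definition hypersurface :: "nat \<Rightarrow> nat \<Rightarrow> ((nat \<Rightarrow> nat) \<Rightarrow> 'a::zero) \<Rightarrow> bool" where
  "hypersurface n d c \<longleftrightarrow> is_poly n c \<and> supp c \<noteq> {} \<and> d \<ge> 1 \<and>
     (\<forall>\<alpha>\<in>supp c. (\<Sum>i\<le>n. \<alpha> i) = d)"

definition nzvecs :: "nat \<Rightarrow> (nat \<Rightarrow> 'a::field) set" where
  "nzvecs n = {x. (\<forall>i>n. x i = 0) \<and> (\<exists>i\<le>n. x i \<noteq> 0)}"

definition proj_rel :: "nat \<Rightarrow> ((nat \<Rightarrow> 'a::field) \<times> (nat \<Rightarrow> 'a)) set" where
  "proj_rel n = {(x, y). x \<in> nzvecs n \<and> y \<in> nzvecs n \<and> (\<exists>t. t \<noteq> 0 \<and> y = (\<lambda>i. t * x i))}"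

definition proj_space :: "nat \<Rightarrow> (nat \<Rightarrow> 'a::field) set set" where
  "proj_space n = nzvecs n // proj_rel n"

definition rat_points :: "nat \<Rightarrow> ((nat \<Rightarrow> nat) \<Rightarrow> 'a::field) \<Rightarrow> (nat \<Rightarrow> 'a) set set" where
  "rat_points n c = {P \<in> proj_space n. \<forall>x\<in>P. peval n c x = 0}"

text \<open>Smoothness at a point (Jacobian criterion): some partial derivative does not vanish.\<close>
definition smooth_at :: "nat \<Rightarrow> ((nat \<Rightarrow> nat) \<Rightarrow> 'a::field) \<Rightarrow> (nat \<Rightarrow> 'a) set \<Rightarrow> bool" where
  "smooth_at n c P \<longleftrightarrow> (\<forall>x\<in>P. \<exists>i\<le>n. peval n (pderiv_var i c) x \<noteq> 0)"

end

theory Submission imports Defs "HOL-Computational_Algebra.Polynomial" begin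

definition lpoly :: "nat \<Rightarrow> ((nat \<Rightarrow> nat) \<Rightarrow> 'a::comm_ring_1) \<Rightarrow> (nat \<Rightarrow> 'a) \<Rightarrow> (nat \<Rightarrow> 'a) \<Rightarrow> 'a poly" where
  "lpoly n c p v = (\<Sum>\<alpha>\<in>supp c. smult (c \<alpha>) (\<Prod>i\<le>n. [:p i, v i:] ^ \<alpha> i))"

lemma lpoly_eval: "poly (lpoly n c p v) t = peval n c (\<lambda>i. p i + t * v i)"
  by (simp add: lpoly_def peval_def poly_sum poly_prod mult.commute)

lemma coeff_mult_top:
  fixes f g :: "'a::comm_ring_1 poly"
  assumes "degree f \<le> m" "degree g \<le> k"
  shows "coeff (f * g) (m + k) = coeff f m * coeff g k"
proof -
  have "coeff (f * g) (m + k) = (\<Sum>i\<le>m+k. coeff f i * coeff g (m + k - i))"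
    by (rule coeff_mult)
  also have "\<dots> = (\<Sum>i\<in>{m}. coeff f i * coeff g (m + k - i))"
  proof (rule sum.mono_neutral_right)
    show "\<forall>i\<in>{..m + k} - {m}. coeff f i * coeff g (m + k - i) = 0"
    proof
      fix i assume i: "i \<in> {..m + k} - {m}"
      show "coeff f i * coeff g (m + k - i) = 0"
      proof (cases "i > m")
        case True then show ?thesis using assms(1) by (simp add: coeff_eq_0)
      next
        case False then have "m + k - i > k" using i by auto
        then show ?thesis using assms(2) by (simp add: coeff_eq_0)
      qed
    qed
  qed auto
  finally show ?thesis by simp
qed

lemma degree_lin_pow: "degree ([:a, b:] ^ k) \<le> k"
proof -
  have "degree ([:a, b:] ^ k) \<le> degree [:a, b:] * k" by (rule degree_power_le)
  also have "\<dots> \<le> 1 * k" by (rule mult_right_mono) (auto simp: degree_pCons_le)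
  finally show ?thesis by simp
qed

lemma coeff_lin_pow: "coeff ([:a, b::'a::comm_ring_1:] ^ k) k = b ^ k"
proof (induction k)
  case 0 then show ?case by simp
next
  case (Suc k)
  have "coeff ([:a, b:] * [:a, b:] ^ k) (1 + k) = coeff [:a, b:] 1 * coeff ([:a, b:] ^ k) k"
    by (rule coeff_mult_top) (auto simp: degree_lin_pow degree_pCons_le)
  then show ?case using Suc by simp
qed

lemma coeff_prod_top:
  fixes f :: "nat \<Rightarrow> 'a::comm_ring_1 poly"
  assumes "finite I" "\<And>i. i \<in> I \<Longrightarrow> degree (f i) \<le> k i"
  shows "coeff (\<Prod>i\<in>I. f i) (\<Sum>i\<in>I. k i) = (\<Prod>i\<in>I. coeff (f i) (k i))
         \<and> degree (\<Prod>i\<in>I. f i) \<le> (\<Sum>i\<in>I. k i)"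
  using assms
proof (induction I rule: finite_induct)
  case empty then show ?case by simp
next
  case (insert j I)
  then have IH: "coeff (\<Prod>i\<in>I. f i) (\<Sum>i\<in>I. k i) = (\<Prod>i\<in>I. coeff (f i) (k i))"
     "degree (\<Prod>i\<in>I. f i) \<le> (\<Sum>i\<in>I. k i)" by auto
  have dj: "degree (f j) \<le> k j" using insert by auto
  show ?case using insert(1,2) IH dj
    by (auto simp: coeff_mult_top intro!: order_trans[OF degree_mult_le] add_mono)
qed

lemma lpoly_degree:
  assumes "hypersurface n d c"
  shows "degree (lpoly n c p v) \<le> d"
proof -
  have fin: "finite (supp c)" using assms by (simp add: hypersurface_def is_poly_def)
  have "\<forall>i>d. coeff (lpoly n c p v) i = 0"
  proof (intro allI impI)
    fix i assume "i > d"
    have "coeff (\<Prod>j\<le>n. [:p j, v j:] ^ \<alpha> j) i = 0" if "\<alpha> \<in> supp c" for \<alpha>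
    proof -
      have "degree (\<Prod>j\<le>n. [:p j, v j:] ^ \<alpha> j) \<le> (\<Sum>j\<le>n. \<alpha> j)"
        using coeff_prod_top[of "{..n}" "\<lambda>j. [:p j, v j:] ^ \<alpha> j" \<alpha>] degree_lin_pow by auto
      also have "\<dots> = d" using assms that by (auto simp: hypersurface_def)
      finally show ?thesis using \<open>i > d\<close> by (simp add: coeff_eq_0)
    qed
    then show "coeff (lpoly n c p v) i = 0" by (simp add: lpoly_def coeff_sum)
  qed
  then show ?thesis by (rule degree_le)
qed

lemma lpoly_top:
  assumes "hypersurface n d c"
  shows "coeff (lpoly n c p v) d = peval n c v"
proof -
  have "coeff (\<Prod>j\<le>n. [:p j, v j:] ^ \<alpha> j) d = (\<Prod>j\<le>n. v j ^ \<alpha> j)" if "\<alpha> \<in> supp c" for \<alpha>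
  proof -
    have "(\<Sum>j\<le>n. \<alpha> j) = d" using assms that by (auto simp: hypersurface_def)
    moreover have "coeff (\<Prod>j\<le>n. [:p j, v j:] ^ \<alpha> j) (\<Sum>j\<le>n. \<alpha> j) = (\<Prod>j\<le>n. coeff ([:p j, v j:] ^ \<alpha> j) (\<alpha> j))"
      using coeff_prod_top[of "{..n}" "\<lambda>j. [:p j, v j:] ^ \<alpha> j" \<alpha>] degree_lin_pow by blast
    ultimately show ?thesis by (simp add: coeff_lin_pow)
  qed
  then show ?thesis by (simp add: lpoly_def coeff_sum peval_def)
qed

lemma poly_pderiv_lin_pow:
  "poly (pderiv ([:a, b::'a::idom:] ^ k)) 0 = of_nat k * a ^ (k - 1) * b"
  by (simp add: pderiv_power pderiv_pCons)

lemma coeff1_pderiv: "coeff q 1 = poly (pderiv q) 0"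
  by (simp add: poly_0_coeff_0 coeff_pderiv)

lemma mono_deriv:
  fixes p v :: "nat \<Rightarrow> 'a::idom"
  shows
  "poly (pderiv (\<Prod>i\<le>n. [:p i, v i:] ^ \<alpha> i)) 0 =
   (\<Sum>j\<le>n. v j * (of_nat (\<alpha> j) * (p j ^ (\<alpha> j - 1) * (\<Prod>i\<in>{..n}-{j}. p i ^ \<alpha> i))))"
  by (simp add: pderiv_prod poly_sum poly_prod poly_pderiv_lin_pow mult_ac)

lemma peval_pderiv:
  fixes c :: "(nat \<Rightarrow> nat) \<Rightarrow> 'a::comm_ring_1"
  assumes "is_poly n c" "j \<le> n"
  shows "peval n (pderiv_var j c) p =
    (\<Sum>\<alpha>\<in>supp c. c \<alpha> * (of_nat (\<alpha> j) * (p j ^ (\<alpha> j - 1) * (\<Prod>i\<in>{..n}-{j}. p i ^ \<alpha> i))))"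
proof -
  define A where "A = {\<alpha>\<in>supp c. \<alpha> j \<ge> 1}"
  define \<sigma> where "\<sigma> = (\<lambda>\<alpha>::nat\<Rightarrow>nat. \<alpha>(j := \<alpha> j - 1))"
  have finA: "finite A" using assms by (simp add: A_def is_poly_def)
  have inj: "inj_on \<sigma> A"
  proof
    fix x y assume "x \<in> A" "y \<in> A" "\<sigma> x = \<sigma> y"
    show "x = y"
    proof
      fix i
      have e: "(x(j := x j - 1)) i = (y(j := y j - 1)) i" using \<open>\<sigma> x = \<sigma> y\<close> by (simp add: \<sigma>_def)
      show "x i = y i"
      proof (cases "i = j")
        case True
        then have "x j - 1 = y j - 1" using e by simp
        moreover have "x j \<ge> 1" "y j \<ge> 1" using \<open>x \<in> A\<close> \<open>y \<in> A\<close> by (auto simp: A_def)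
        ultimately show ?thesis using True by simp
      next
        case False then show ?thesis using e by simp
      qed
    qed
  qed
  have sub: "supp (pderiv_var j c) \<subseteq> \<sigma> ` A"
  proof
    fix \<beta> assume "\<beta> \<in> supp (pderiv_var j c)"
    then have "c (\<beta>(j := \<beta> j + 1)) \<noteq> 0" by (auto simp: supp_def pderiv_var_def)
    then have "\<beta>(j := \<beta> j + 1) \<in> A" by (auto simp: A_def supp_def)
    moreover have "\<beta> = \<sigma> (\<beta>(j := \<beta> j + 1))" by (auto simp: \<sigma>_def)
    ultimately show "\<beta> \<in> \<sigma> ` A" by blast
  qed
  have "peval n (pderiv_var j c) p = (\<Sum>\<beta>\<in>\<sigma> ` A. pderiv_var j c \<beta> * (\<Prod>i\<le>n. p i ^ \<beta> i))"
    unfolding peval_def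
    by (rule sum.mono_neutral_left) (use finA sub in \<open>auto simp: supp_def\<close>)
  also have "\<dots> = (\<Sum>\<alpha>\<in>A. pderiv_var j c (\<sigma> \<alpha>) * (\<Prod>i\<le>n. p i ^ \<sigma> \<alpha> i))"
    by (rule sum.reindex[OF inj, unfolded comp_def])
  also have "\<dots> = (\<Sum>\<alpha>\<in>A. c \<alpha> * (of_nat (\<alpha> j) * (p j ^ (\<alpha> j - 1) * (\<Prod>i\<in>{..n}-{j}. p i ^ \<alpha> i))))"
  proof (rule sum.cong[OF refl])
    fix \<alpha> assume a: "\<alpha> \<in> A"
    have e: "(\<sigma> \<alpha>)(j := \<sigma> \<alpha> j + 1) = \<alpha>" using a by (auto simp: \<sigma>_def A_def)
    have "(\<Prod>i\<le>n. p i ^ \<sigma> \<alpha> i) = p j ^ \<sigma> \<alpha> j * (\<Prod>i\<in>{..n}-{j}. p i ^ \<sigma> \<alpha> i)"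
      using assms(2) by (simp add: prod.remove)
    also have "(\<Prod>i\<in>{..n}-{j}. p i ^ \<sigma> \<alpha> i) = (\<Prod>i\<in>{..n}-{j}. p i ^ \<alpha> i)"
      by (rule prod.cong) (auto simp: \<sigma>_def)
    finally have "(\<Prod>i\<le>n. p i ^ \<sigma> \<alpha> i) = p j ^ (\<alpha> j - 1) * (\<Prod>i\<in>{..n}-{j}. p i ^ \<alpha> i)"
      by (simp add: \<sigma>_def)
    moreover have "pderiv_var j c (\<sigma> \<alpha>) = of_nat (\<alpha> j) * c \<alpha>"
      unfolding pderiv_var_def e using a by (simp add: \<sigma>_def A_def)
    ultimately show "pderiv_var j c (\<sigma> \<alpha>) * (\<Prod>i\<le>n. p i ^ \<sigma> \<alpha> i) =
        c \<alpha> * (of_nat (\<alpha> j) * (p j ^ (\<alpha> j - 1) * (\<Prod>i\<in>{..n}-{j}. p i ^ \<alpha> i)))"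
      by (simp add: mult_ac)
  qed
  also have "\<dots> = (\<Sum>\<alpha>\<in>supp c. c \<alpha> * (of_nat (\<alpha> j) * (p j ^ (\<alpha> j - 1) * (\<Prod>i\<in>{..n}-{j}. p i ^ \<alpha> i))))"
  proof (rule sum.mono_neutral_left)
    show "finite (supp c)" using assms by (simp add: is_poly_def)
    show "A \<subseteq> supp c" by (auto simp: A_def)
    show "\<forall>\<alpha>\<in>supp c - A. c \<alpha> * (of_nat (\<alpha> j) * (p j ^ (\<alpha> j - 1) * (\<Prod>i\<in>{..n}-{j}. p i ^ \<alpha> i))) = 0"
      by (auto simp: A_def not_le)
  qed
  finally show ?thesis .
qed

lemma lpoly_lin:
  fixes c :: "(nat \<Rightarrow> nat) \<Rightarrow> 'a::idom"
  assumes "is_poly n c"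
  shows "coeff (lpoly n c p v) 1 = (\<Sum>j\<le>n. v j * peval n (pderiv_var j c) p)"
proof -
  have "coeff (lpoly n c p v) 1 = (\<Sum>\<alpha>\<in>supp c. c \<alpha> *
      (\<Sum>j\<le>n. v j * (of_nat (\<alpha> j) * (p j ^ (\<alpha> j - 1) * (\<Prod>i\<in>{..n}-{j}. p i ^ \<alpha> i)))))"
    unfolding lpoly_def coeff_sum coeff_smult
    by (rule sum.cong[OF refl]) (simp only: coeff1_pderiv mono_deriv)
  also have "\<dots> = (\<Sum>j\<le>n. v j * (\<Sum>\<alpha>\<in>supp c. c \<alpha> * (of_nat (\<alpha> j) * (p j ^ (\<alpha> j - 1) * (\<Prod>i\<in>{..n}-{j}. p i ^ \<alpha> i)))))"
    by (simp add: sum_distrib_left sum_distrib_right mult_ac sum.swap[of _ "supp c"])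
  also have "\<dots> = (\<Sum>j\<le>n. v j * peval n (pderiv_var j c) p)"
    by (rule sum.cong) (simp_all add: peval_pderiv[OF assms])
  finally show ?thesis .
qed


lemma final:
  fixes c :: "(nat \<Rightarrow> nat) \<Rightarrow> 'a::{finite,field}"
  assumes hs: "hypersurface n d c"
    and g: "(\<Sum>j\<le>n. v j * peval n (pderiv_var j c) p) \<noteq> 0"
    and Fv: "peval n c v = 0"
    and Fl: "\<forall>t. peval n c (\<lambda>i. p i + t * v i) = 0"
  shows "d \<ge> card (UNIV :: 'a set) + 1"
proof -
  define H where "H = lpoly n c p v"
  have hs': "is_poly n c" using hs by (simp add: hypersurface_def)
  have "coeff H 1 \<noteq> 0" using g lpoly_lin[OF hs'] by (simp add: H_def)
  then have H0: "H \<noteq> 0" by auto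
  have "{x. poly H x = 0} = UNIV" using Fl by (simp add: H_def lpoly_eval)
  then have c1: "card (UNIV :: 'a set) \<le> degree H" using card_poly_roots_bound[OF H0] by simp
  have dl: "degree H \<le> d" using lpoly_degree[OF hs] by (simp add: H_def)
  have "coeff H d = 0" using lpoly_top[OF hs] Fv by (simp add: H_def)
  then have "degree H \<noteq> d" using H0 by auto
  then show ?thesis using c1 dl by linarith
qed

lemma finite_nzvecs: "finite (nzvecs n :: (nat \<Rightarrow> 'a::{finite,field}) set)"
proof -
  have "nzvecs n \<subseteq> (\<lambda>xs i. if i < length xs then xs ! i else 0) ` {xs :: 'a list. length xs = Suc n}"
  proof
    fix x :: "nat \<Rightarrow> 'a" assume "x \<in> nzvecs n"
    then have "x = (\<lambda>i. if i < length (map x [0..<Suc n]) then map x [0..<Suc n] ! i else 0)"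
      by (auto simp: nzvecs_def fun_eq_iff simp del: upt_Suc)
    moreover have "map x [0..<Suc n] \<in> {xs :: 'a list. length xs = Suc n}" by simp
    ultimately show "x \<in> (\<lambda>xs i. if i < length xs then xs ! i else 0) ` {xs :: 'a list. length xs = Suc n}"
      by (rule image_eqI)
  qed
  moreover have "finite {xs :: 'a list. length xs = Suc n}"
    using finite_lists_length_eq[of "UNIV :: 'a set" "Suc n"] by simp
  ultimately show ?thesis using finite_subset finite_imageI by blast
qed

lemma self_in_class: "x \<in> nzvecs n \<Longrightarrow> x \<in> proj_rel n `` {x}"
  unfolding proj_rel_def by (auto intro: exI[of _ 1])

lemma class_in: "x \<in> nzvecs n \<Longrightarrow> proj_rel n `` {x} \<in> proj_space n"
  unfolding proj_space_def by (rule quotientI)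

theorem lemma2p7:
  fixes c :: "(nat \<Rightarrow> nat) \<Rightarrow> 'a::{finite,field}" and n d :: nat
  assumes "n \<ge> 2"
    and "hypersurface n d c"
    and "\<exists>P\<in>rat_points n c. smooth_at n c P"
    and "card (rat_points n c) \<ge> card (proj_space n :: (nat \<Rightarrow> 'a) set set) - 1"
  shows "d \<ge> card (UNIV :: 'a set) + 1"
proof -
  let ?F = "peval n c"
  have finP: "finite (proj_space n :: (nat \<Rightarrow> 'a) set set)"
    unfolding proj_space_def
    by (rule finite_quotient[OF finite_nzvecs]) (auto simp: proj_rel_def)
  have ratsub: "rat_points n c \<subseteq> proj_space n" by (auto simp: rat_points_def)
  obtain p where p: "p \<in> nzvecs n" "?F p = 0" "\<exists>j\<le>n. peval n (pderiv_var j c) p \<noteq> 0"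
  proof -
    obtain P where P: "P \<in> rat_points n c" "smooth_at n c P" using assms(3) by blast
    then have "P \<in> nzvecs n // proj_rel n" by (auto simp: rat_points_def proj_space_def)
    then obtain x where x: "x \<in> nzvecs n" "P = proj_rel n `` {x}" by (auto elim: quotientE)
    then have "x \<in> P" using self_in_class by auto
    then show ?thesis using that x P by (auto simp: rat_points_def smooth_at_def)
  qed
  obtain m where m: "\<And>x. x \<in> nzvecs n \<Longrightarrow> ?F x \<noteq> 0 \<Longrightarrow> \<exists>s. x = (\<lambda>i. s * m i)"
  proof -
    define B where "B = proj_space n - rat_points n c"
    have "card B = card (proj_space n :: (nat \<Rightarrow> 'a) set set) - card (rat_points n c)"
      unfolding B_def by (rule card_Diff_subset) (use ratsub finP in \<open>auto intro: finite_subset\<close>)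
    then have "card B \<le> Suc 0" using assms(4) by linarith
    then have Buniq: "\<forall>a\<in>B. \<forall>b\<in>B. a = b"
      using card_le_Suc0_iff_eq[of B] finP by (auto simp: B_def)
    have inB: "proj_rel n `` {x} \<in> B" if "x \<in> nzvecs n" "?F x \<noteq> 0" for x
      using that class_in[OF that(1)] self_in_class[OF that(1)] by (auto simp: B_def rat_points_def)
    show ?thesis
    proof (cases "B = {}")
      case True then show ?thesis using inB that by blast
    next
      case False
      then obtain M where M: "M \<in> B" by blast
      then have "M \<in> nzvecs n // proj_rel n" by (auto simp: B_def proj_space_def)
      then obtain y where y: "y \<in> nzvecs n" "M = proj_rel n `` {y}" by (auto elim: quotientE)
      show ?thesis
      proof (rule that[of y])
        fix x assume x: "x \<in> nzvecs n" "?F x \<noteq> 0"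
        then have "proj_rel n `` {x} = M" using inB M Buniq by blast
        then have "y \<in> proj_rel n `` {x}" using y self_in_class by auto
        then obtain t where t: "t \<noteq> 0" "y = (\<lambda>i. t * x i)" by (auto simp: proj_rel_def)
        then have "x = (\<lambda>i. inverse t * y i)" by (auto simp: fun_eq_iff)
        then show "\<exists>s. x = (\<lambda>i. s * y i)" by blast
      qed
    qed
  qed
  define W where "W = (\<lambda>(a, b). \<lambda>i. a * p i + b * m i) ` (UNIV :: ('a \<times> 'a) set)"
  have inW: "(\<lambda>i. a * p i + b * m i) \<in> W" for a b unfolding W_def by force
  have W0: "x \<in> nzvecs n \<Longrightarrow> x \<notin> W \<Longrightarrow> ?F x = 0" for x
  proof (rule ccontr)
    assume "x \<in> nzvecs n" "x \<notin> W" "?F x \<noteq> 0"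
    then obtain s where "x = (\<lambda>i. s * m i)" using m by blast
    then have "x = (\<lambda>i. 0 * p i + s * m i)" by simp
    then show False using \<open>x \<notin> W\<close> inW[of 0 s] by simp
  qed
  obtain u where u: "u \<notin> W" "\<forall>i>n. u i = 0"
  proof -
    define V where "V = (\<lambda>(a, b, e). \<lambda>i::nat. if i = 0 then a else if i = 1 then b else if i = 2 then e else (0::'a)) ` UNIV"
    have q2: "card (UNIV :: 'a set) \<ge> 2"
    proof -
      have "card {0, 1 :: 'a} \<le> card (UNIV :: 'a set)" by (rule card_mono) auto
      then show ?thesis by simp
    qed
    have "card W \<le> card (UNIV :: ('a \<times> 'a) set)" unfolding W_def by (rule card_image_le) simp
    also have "\<dots> = card (UNIV :: 'a set) * card (UNIV :: 'a set)"
      unfolding UNIV_Times_UNIV[symmetric] by (rule card_cartesian_product)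
    finally have cW: "card W \<le> card (UNIV :: 'a set) ^ 2" by (simp add: power2_eq_square)
    have "inj (\<lambda>(a, b, e). \<lambda>i::nat. if i = 0 then a else if i = 1 then b else if i = 2 then e else (0::'a))"
    proof (rule injI)
      fix x y :: "'a \<times> 'a \<times> 'a"
      assume h: "(case x of (a, b, e) \<Rightarrow> \<lambda>i::nat. if i = 0 then a else if i = 1 then b else if i = 2 then e else 0) =
                 (case y of (a, b, e) \<Rightarrow> \<lambda>i. if i = 0 then a else if i = 1 then b else if i = 2 then e else 0)"
      obtain a b e where "x = (a, b, e)" by (cases x) auto
      moreover obtain a' b' e' where "y = (a', b', e')" by (cases y) auto
      ultimately show "x = y" using fun_cong[OF h, of 0] fun_cong[OF h, of 1] fun_cong[OF h, of 2] by auto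
    qed
    then have "card V = card (UNIV :: ('a \<times> 'a \<times> 'a) set)" unfolding V_def by (simp add: card_image)
    also have "\<dots> = card (UNIV :: 'a set) ^ 3" unfolding UNIV_Times_UNIV[symmetric] card_cartesian_product by (simp add: power3_eq_cube)
    finally have cV: "card V = card (UNIV :: 'a set) ^ 3" .
    have "card (UNIV :: 'a set) ^ 2 < card (UNIV :: 'a set) ^ 3"
      using q2 by (intro power_strict_increasing) auto
    moreover have "finite W" by (simp add: W_def)
    ultimately have "\<not> V \<subseteq> W" using cW cV card_mono[of W V] by linarith
    then obtain w where "w \<in> V" "w \<notin> W" by blast
    moreover have "\<forall>i>n. w i = 0" using \<open>w \<in> V\<close> assms(1) by (auto simp: V_def)
    ultimately show ?thesis using that by blast
  qed
  obtain j where j: "j \<le> n" "peval n (pderiv_var j c) p \<noteq> 0" using p by blast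
  let ?g = "\<lambda>v. (\<Sum>i\<le>n. v i * peval n (pderiv_var i c) p)"
  define v0 where "v0 = (\<lambda>i. if i = j then (1::'a) else 0)"
  have "?g v0 = (\<Sum>i\<le>n. if i = j then peval n (pderiv_var i c) p else 0)"
    by (rule sum.cong) (auto simp: v0_def)
  then have gv0: "?g v0 \<noteq> 0" using j by simp
  have v0n: "\<forall>i>n. v0 i = 0" using j by (auto simp: v0_def)
  have gadd: "?g (\<lambda>i. x i + y i) = ?g x + ?g y" for x y by (simp add: distrib_right sum.distrib)
  obtain v where v: "v \<notin> W" "\<forall>i>n. v i = 0" "?g v \<noteq> 0"
  proof (cases "?g u \<noteq> 0")
    case True then show ?thesis using that u by blast
  next
    case gu: False
    show ?thesis
    proof (cases "v0 \<in> W")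
      case False then show ?thesis using that v0n gv0 by blast
    next
      case True
      then obtain a b where ab: "v0 = (\<lambda>i. a * p i + b * m i)" by (auto simp: W_def)
      have "(\<lambda>i. v0 i + u i) \<notin> W"
      proof
        assume "(\<lambda>i. v0 i + u i) \<in> W"
        then obtain a' b' where "(\<lambda>i. v0 i + u i) = (\<lambda>i. a' * p i + b' * m i)" by (auto simp: W_def)
        then have "u = (\<lambda>i. (a' - a) * p i + (b' - b) * m i)"
          using ab by (auto simp: fun_eq_iff algebra_simps)
        then show False using u inW[of "a' - a" "b' - b"] by simp
      qed
      moreover have "?g (\<lambda>i. v0 i + u i) \<noteq> 0" using gadd gu gv0 by simp
      ultimately show ?thesis using that v0n u by auto
    qed
  qed
  have vnz: "v \<in> nzvecs n"
  proof -
    have "\<exists>i\<le>n. v i \<noteq> 0"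
    proof (rule ccontr)
      assume "\<not> ?thesis"
      then have "v = (\<lambda>i. 0 * p i + 0 * m i)" using v(2) by (auto simp: fun_eq_iff not_le[symmetric])
      then show False using v(1) inW[of 0 0] by simp
    qed
    then show ?thesis using v(2) by (auto simp: nzvecs_def)
  qed
  have Fl: "\<forall>t. ?F (\<lambda>i. p i + t * v i) = 0"
  proof
    fix t :: 'a
    show "?F (\<lambda>i. p i + t * v i) = 0"
    proof (cases "t = 0")
      case True then show ?thesis using p by simp
    next
      case False
      have xW: "(\<lambda>i. p i + t * v i) \<notin> W"
      proof
        assume "(\<lambda>i. p i + t * v i) \<in> W"
        then obtain a b where ab: "(\<lambda>i. p i + t * v i) = (\<lambda>i. a * p i + b * m i)" by (auto simp: W_def)
        have "v = (\<lambda>i. ((a - 1) / t) * p i + (b / t) * m i)"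
        proof
          fix i
          have "p i + t * v i = a * p i + b * m i" using fun_cong[OF ab, of i] by simp
          then show "v i = ((a - 1) / t) * p i + (b / t) * m i"
            using False by (simp add: field_simps)
        qed
        then show False using v(1) inW[of "(a - 1) / t" "b / t"] by simp
      qed
      have "(\<lambda>i. p i + t * v i) \<in> nzvecs n"
      proof -
        have "\<exists>i\<le>n. p i + t * v i \<noteq> 0"
        proof (rule ccontr)
          assume "\<not> ?thesis"
          moreover have "\<forall>i>n. p i + t * v i = 0" using p(1) v(2) by (auto simp: nzvecs_def)
          ultimately have "(\<lambda>i. p i + t * v i) = (\<lambda>i. 0 * p i + 0 * m i)"
            by (auto simp: fun_eq_iff not_le[symmetric])
          then show False using xW inW[of 0 0] by simp
        qed
        then show ?thesis using p(1) v(2) by (auto simp: nzvecs_def)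
      qed
      then show ?thesis using W0 xW by blast
    qed
  qed
  show ?thesis
    by (rule final[OF assms(2) v(3) W0[OF vnz v(1)] Fl])
qed

end
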